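(* Let $(X,\|\cdot\|)$ be a real Banach space, let $(\Omega,\Sigma,\mu)$ be a complete probability space, let $n$ be a positive integer and let $N$ be a monotonous norm on $\mathbb{R}^n$. Let $W$ be a weakly compact subset of $X$. Then $L_\infty(\mu,W)$ is $N$-simultaneously proximinal in $L_\infty(\mu,X)$; that is, for every $f_1,\ldots,f_n\in L_\infty(\mu,X)$ there exists $g_0\in L_\infty(\mu,W)$ such that $$N\big(\|f_1-g_0\|_\infty,\ldots,\|f_n-g_0\|_\infty\big)\le N\big(\|f_1-g\|_\infty,\ldots,\|f_n-g\|_\infty\big)\quad\text{for every } g\in L_\infty(\mu,W).$$
   Context: $L_\infty(\mu,X)$ denotes the Banach space of (equivalence classes of) $\mu$-measurable (strongly measurable, in the Bochner sense), essentially bounded functions $f:\Omega\to X$, with norm $\|f\|_\infty=\operatorname{ess\,sup}_{s\in\Omega}\|f(s)\|$. For a subset $W\subset X$, $L_\infty(\mu,W)=\{g\in L_\infty(\mu,X): g(s)\in W \text{ for a.e. } s\in\Omega\}$. A norm $N$ on $\mathbb{R}^n$ is monotonous if for all $t=(t_i),s=(s_i)\in\mathbb{R}^n$ with $|t_i|\le|s_i|$ for $i=1,\ldots,n$ one has $N(t)\le N(s)$. For a subset $Y$ of a normed space $Z$, an element $y_0\in Y$ is a best $N$-simultaneous approximation from $Y$ of $z_1,\ldots,z_n\in Z$ if $N(\|z_1-y_0\|,\ldots,\|z_n-y_0\|)\le N(\|z_1-y\|,\ldots,\|z_n-y\|)$ for all $y\in Y$; $Y$ is $N$-simultaneously proximinal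 in $Z$ if every $n$-tuple in $Z$ admits a best $N$-simultaneous approximation from $Y$. *)

theory Defs
  imports "HOL-Analysis.Analysis" "HOL-Probability.Probability"
begin

definition weak_topology :: "'x::real_normed_vector topology" where
  "weak_topology = topology_generated_by
     {{x. l x \<in> U} | l U. bounded_linear (l :: 'x \<Rightarrow> real) \<and> open U}"

definition weakly_compact :: "'x::real_normed_vector set \<Rightarrow> bool" where
  "weakly_compact W \<longleftrightarrow> compactin weak_topology W"

definition strongly_measurable :: "'a measure \<Rightarrow> ('a \<Rightarrow> 'x::real_normed_vector) \<Rightarrow> bool" where
  "strongly_measurable M f \<longleftrightarrow>
     (\<exists>s. (\<forall>k. simple_function M (s k)) \<and> (AE x in M. (\<lambda>k. s k x) \<longlonglongrightarrow> f x))"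

text \<open>Representatives of elements of L_infty(mu,X).\<close>
definition Linf :: "'a measure \<Rightarrow> ('a \<Rightarrow> 'x::real_normed_vector) set" where
  "Linf M = {f. strongly_measurable M f \<and> (\<exists>B. AE x in M. norm (f x) \<le> B)}"

definition Linf_on :: "'a measure \<Rightarrow> 'x::real_normed_vector set \<Rightarrow> ('a \<Rightarrow> 'x) set" where
  "Linf_on M W = {g \<in> Linf M. AE x in M. g x \<in> W}"

definition Linf_norm :: "'a measure \<Rightarrow> ('a \<Rightarrow> 'x::real_normed_vector) \<Rightarrow> real" where
  "Linf_norm M f = Inf {B. AE x in M. norm (f x) \<le> B}"

definition is_norm :: "(real^'n \<Rightarrow> real) \<Rightarrow> bool" where
  "is_norm N \<longleftrightarrow> (\<forall>x. N x \<ge> 0) \<and> (\<forall>x. N x = 0 \<longleftrightarrow> x = 0)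
     \<and> (\<forall>c x. N (c *\<^sub>R x) = \<bar>c\<bar> * N x) \<and> (\<forall>x y. N (x + y) \<le> N x + N y)"

definition monotonous :: "(real^'n \<Rightarrow> real) \<Rightarrow> bool" where
  "monotonous N \<longleftrightarrow> (\<forall>t s. (\<forall>i. \<bar>t $ i\<bar> \<le> \<bar>s $ i\<bar>) \<longrightarrow> N t \<le> N s)"

end

theory Submission
  imports Defs
begin

definition hbset :: "('x::real_vector \<Rightarrow> real) \<Rightarrow> 'x \<Rightarrow> ('x \<times> real) set \<Rightarrow> bool" where
  "hbset p y G \<longleftrightarrow> (0,0) \<in> G \<and> (\<forall>u\<in>G. \<forall>v\<in>G. (fst u + fst v, snd u + snd v) \<in> G)
     \<and> (\<forall>c. \<forall>u\<in>G. (c *\<^sub>R fst u, c * snd u) \<in> G) \<and> (\<forall>u\<in>G. snd u \<le> p (fst u)) \<and> (y, p y) \<in> G"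

lemma hb_sublinear:
  fixes p :: "'x::real_vector \<Rightarrow> real"
  assumes padd: "\<And>x y. p (x + y) \<le> p x + p y"
    and phom: "\<And>c x. c \<ge> 0 \<Longrightarrow> p (c *\<^sub>R x) = c * p x"
  shows "\<exists>l. (\<forall>x y. l (x + y) = l x + l y) \<and> (\<forall>c x. l (c *\<^sub>R x) = c * l x)
            \<and> (\<forall>x. l x \<le> p x) \<and> l y = p y"
proof -
  have p0: "p 0 = 0" using phom[of 0 0] by simp
  have plow: "t * p x \<le> p (t *\<^sub>R x)" for t x
  proof (cases "t \<ge> 0")
    case True then show ?thesis by (simp add: phom)
  next
    case False
    have "0 \<le> p (t *\<^sub>R x) + p ((-t) *\<^sub>R x)" using padd[of "t *\<^sub>R x" "(-t) *\<^sub>R x"] p0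
      by (simp add: scaleR_left_distrib[symmetric])
    moreover have "p ((-t) *\<^sub>R x) = (-t) * p x" using False by (intro phom) simp
    ultimately show ?thesis by simp
  qed
  define A where "A = {G. hbset p y G}"
  define G0 where "G0 = {(t *\<^sub>R y, t * p y) | t. True}"
  have G0A: "G0 \<in> A"
    unfolding A_def hbset_def G0_def mem_Collect_eq
  proof (intro conjI ballI allI)
    show "\<exists>t. ((0::'x), (0::real)) = (t *\<^sub>R y, t * p y) \<and> True" by (rule exI[of _ 0]) simp
    show "\<exists>t. (y, p y) = (t *\<^sub>R y, t * p y) \<and> True" by (rule exI[of _ 1]) simp
  next
    fix u v assume "u \<in> {(t *\<^sub>R y, t * p y) |t. True}" "v \<in> {(t *\<^sub>R y, t * p y) |t. True}"
    then obtain a b where "u = (a *\<^sub>R y, a * p y)" "v = (b *\<^sub>R y, b * p y)" by auto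
    then show "\<exists>t. (fst u + fst v, snd u + snd v) = (t *\<^sub>R y, t * p y) \<and> True"
      by (auto intro!: exI[of _ "a+b"] simp: scaleR_left_distrib distrib_right)
  next
    fix c u assume "u \<in> {(t *\<^sub>R y, t * p y) |t. True}"
    then obtain a where "u = (a *\<^sub>R y, a * p y)" by auto
    then show "\<exists>t. (c *\<^sub>R fst u, c * snd u) = (t *\<^sub>R y, t * p y) \<and> True"
      by (auto intro!: exI[of _ "c*a"])
  next
    fix u assume "u \<in> {(t *\<^sub>R y, t * p y) |t. True}"
    then obtain a where "u = (a *\<^sub>R y, a * p y)" by auto
    then show "snd u \<le> p (fst u)" using plow by simp
  qed
  have "\<exists>M\<in>A. \<forall>X\<in>A. M \<subseteq> X \<longrightarrow> X = M"
  proof (rule subset_Zorn_nonempty)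
    show "A \<noteq> {}" using G0A by blast
  next
    fix C assume Cne: "C \<noteq> {}" and ch: "subset.chain A C"
    have CA: "C \<subseteq> A" and chn: "\<And>X Y. X \<in> C \<Longrightarrow> Y \<in> C \<Longrightarrow> X \<subseteq> Y \<or> Y \<subseteq> X"
      using ch unfolding subset.chain_def by blast+
    show "\<Union>C \<in> A"
      unfolding A_def hbset_def mem_Collect_eq
    proof (intro conjI ballI allI)
      obtain X where "X \<in> C" using Cne by blast
      then show "(0,0) \<in> \<Union>C" "(y, p y) \<in> \<Union>C" using CA unfolding A_def hbset_def by auto
    next
      fix u v assume "u \<in> \<Union>C" "v \<in> \<Union>C"
      then obtain X Y where XY: "X \<in> C" "Y \<in> C" "u \<in> X" "v \<in> Y" by blast
      then have "u \<in> X \<union> Y" "v \<in> X \<union> Y" "X \<union> Y \<in> C" using chn[OF XY(1,2)]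
        by (auto simp: sup_absorb1 sup_absorb2)
      then show "(fst u + fst v, snd u + snd v) \<in> \<Union>C"
        using CA unfolding A_def hbset_def by blast
    next
      fix c u assume "u \<in> \<Union>C"
      then show "(c *\<^sub>R fst u, c * snd u) \<in> \<Union>C" using CA unfolding A_def hbset_def by blast
    next
      fix u assume "u \<in> \<Union>C"
      then show "snd u \<le> p (fst u)" using CA unfolding A_def hbset_def by blast
    qed
  qed
  then obtain G where GA: "G \<in> A" and Gmax: "\<And>X. X \<in> A \<Longrightarrow> G \<subseteq> X \<Longrightarrow> X = G" by blast
  have G0: "(0,0) \<in> G" and Gadd: "\<And>x a x' a'. (x,a) \<in> G \<Longrightarrow> (x',a') \<in> G \<Longrightarrow> (x+x', a+a') \<in> G"
    and Gsc: "\<And>c x a. (x,a) \<in> G \<Longrightarrow> (c *\<^sub>R x, c * a) \<in> G"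
    and Gdom: "\<And>x a. (x,a) \<in> G \<Longrightarrow> a \<le> p x" and Gy: "(y, p y) \<in> G"
    using GA unfolding A_def hbset_def by force+
  have Gfun: "a = b" if "(x,a) \<in> G" "(x,b) \<in> G" for x a b
  proof -
    have "(x + (-1) *\<^sub>R x, a + (-1) * b) \<in> G" using Gadd[OF that(1) Gsc[OF that(2)]] .
    then have 1: "a - b \<le> 0" using Gdom p0 by force
    have "(x + (-1) *\<^sub>R x, b + (-1) * a) \<in> G" using Gadd[OF that(2) Gsc[OF that(1)]] .
    then have "b - a \<le> 0" using Gdom p0 by force
    with 1 show ?thesis by simp
  qed
  have total: "\<exists>a. (z,a) \<in> G" for z
  proof (rule ccontr)
    assume nz: "\<not> (\<exists>a. (z,a) \<in> G)"
    define S where "S = {a' - p (x' - z) | x' a'. (x',a') \<in> G}"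
    define c where "c = Sup S"
    have key: "a' - p (x' - z) \<le> p (x + z) - a" if "(x,a) \<in> G" "(x',a') \<in> G" for x a x' a'
    proof -
      have "a + a' \<le> p (x + x')" using Gdom[OF Gadd[OF that]] .
      also have "x + x' = (x + z) + (x' - z)" by simp
      also have "p \<dots> \<le> p (x + z) + p (x' - z)" by (rule padd)
      finally show ?thesis by simp
    qed
    have Sne: "S \<noteq> {}" using G0 unfolding S_def by blast
    have Sbdd: "bdd_above S" unfolding S_def bdd_above_def using key[OF G0] by blast
    have cup: "a' - p (x' - z) \<le> c" if "(x',a') \<in> G" for x' a'
      unfolding c_def using that Sbdd by (intro cSup_upper) (auto simp: S_def)
    have clow: "c \<le> p (x + z) - a" if "(x,a) \<in> G" for x a
      unfolding c_def using Sne by (intro cSup_least) (auto simp: S_def intro: key[OF that])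
    define G' where "G' = {(x + t *\<^sub>R z, a + t * c) | x a t. (x,a) \<in> G}"
    have G'A: "G' \<in> A"
      unfolding A_def hbset_def mem_Collect_eq
    proof (intro conjI ballI allI)
      show "(0,0) \<in> G'" unfolding G'_def using G0 by force
      show "(y, p y) \<in> G'" unfolding G'_def using Gy by force
    next
      fix u v assume "u \<in> G'" "v \<in> G'"
      then obtain x a t x' a' t' where "(x,a) \<in> G" "(x',a') \<in> G" 
        "u = (x + t *\<^sub>R z, a + t * c)" "v = (x' + t' *\<^sub>R z, a' + t' * c)" unfolding G'_def by blast
      moreover have "(x+x', a+a') \<in> G" using Gadd calculation by blast
      ultimately have "(fst u + fst v, snd u + snd v) = ((x+x') + (t+t') *\<^sub>R z, (a+a') + (t+t') * c)
         \<and> (x+x', a+a') \<in> G"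
        by (simp add: algebra_simps)
      then show "(fst u + fst v, snd u + snd v) \<in> G'" unfolding G'_def by blast
    next
      fix d u assume "u \<in> G'"
      then obtain x a t where "(x,a) \<in> G" "u = (x + t *\<^sub>R z, a + t * c)" unfolding G'_def by blast
      moreover have "(d *\<^sub>R x, d * a) \<in> G" using Gsc calculation by blast
      ultimately have "(d *\<^sub>R fst u, d * snd u) = (d *\<^sub>R x + (d*t) *\<^sub>R z, d * a + (d*t) * c)
         \<and> (d *\<^sub>R x, d * a) \<in> G"
        by (simp add: algebra_simps)
      then show "(d *\<^sub>R fst u, d * snd u) \<in> G'" unfolding G'_def by blast
    next
      fix u assume "u \<in> G'"
      then obtain x a t where xa: "(x,a) \<in> G" and u: "u = (x + t *\<^sub>R z, a + t * c)" unfolding G'_def by blast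
      show "snd u \<le> p (fst u)"
      proof (cases "t > 0")
        case True
        have "c \<le> p ((1/t) *\<^sub>R x + z) - (1/t) * a" using clow[OF Gsc[OF xa, of "1/t"]] .
        then have "t * c \<le> t * p ((1/t) *\<^sub>R x + z) - a" using True
          by (simp add: field_simps)
        also have "t * p ((1/t) *\<^sub>R x + z) = p (t *\<^sub>R ((1/t) *\<^sub>R x + z))"
          using True by (simp add: phom)
        also have "t *\<^sub>R ((1/t) *\<^sub>R x + z) = x + t *\<^sub>R z" using True
          by (simp add: scaleR_add_right)
        finally show ?thesis using u by simp
      next
        case False
        show ?thesis
        proof (cases "t = 0")
          case True then show ?thesis using u Gdom[OF xa] by simp
        next
          case False
          define s where "s = -t"
          have s: "s > 0" using False \<open>\<not> t > 0\<close> by (simp add: s_def)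
          have "(1/s) * a - p ((1/s) *\<^sub>R x - z) \<le> c" using cup[OF Gsc[OF xa, of "1/s"]] .
          then have "a - s * p ((1/s) *\<^sub>R x - z) \<le> s * c" using s
            by (simp add: field_simps)
          also have "s * p ((1/s) *\<^sub>R x - z) = p (s *\<^sub>R ((1/s) *\<^sub>R x - z))"
            using s by (simp add: phom)
          also have "s *\<^sub>R ((1/s) *\<^sub>R x - z) = x + t *\<^sub>R z" using s
            by (simp add: scaleR_diff_right s_def)
          finally show ?thesis using u by (simp add: s_def)
        qed
      qed
    qed
    have "G \<subseteq> G'" unfolding G'_def by force
    moreover have "(z, c) \<in> G'" unfolding G'_def using G0 by force
    ultimately show False using Gmax[OF G'A] nz by blast
  qed
  define l where "l x = (THE a. (x,a) \<in> G)" for x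
  have lG: "(x, l x) \<in> G" for x
    using total[of x] unfolding l_def by (metis Gfun theI)
  have leq: "l x = a" if "(x,a) \<in> G" for x a using Gfun[OF lG that] .
  show ?thesis
  proof (intro exI[of _ l] conjI allI)
    show "l (x + y) = l x + l y" for x y by (rule leq, rule Gadd[OF lG lG])
    show "l (c *\<^sub>R x) = c * l x" for c x by (rule leq, rule Gsc[OF lG])
    show "l x \<le> p x" for x by (rule Gdom[OF lG])
    show "l y = p y" by (rule leq[OF Gy])
  qed
qed

lemma weak_topspace: "topspace (weak_topology :: 'x::real_normed_vector topology) = UNIV"
proof -
  have "UNIV \<in> {{x. l x \<in> U} | l U. bounded_linear (l :: 'x \<Rightarrow> real) \<and> open U}"
    by (rule CollectI, rule exI[of _ "\<lambda>_. 0"], rule exI[of _ UNIV]) (auto intro: bounded_linear_zero)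
  then show ?thesis unfolding weak_topology_def topology_generated_by_topspace by blast
qed

lemma weak_open_preimage:
  fixes l :: "'x::real_normed_vector \<Rightarrow> real"
  assumes "bounded_linear l" "open U"
  shows "openin weak_topology {x. l x \<in> U}"
  unfolding weak_topology_def using assms by (intro topology_generated_by_Basis) blast

lemma weak_closed_preimage:
  fixes l :: "'x::real_normed_vector \<Rightarrow> real"
  assumes "bounded_linear l" "closed F"
  shows "closedin weak_topology {x. l x \<in> F}"
proof -
  have "openin weak_topology {x. l x \<in> - F}" using assms by (intro weak_open_preimage) auto
  moreover have "{x. l x \<in> - F} = topspace weak_topology - {x. l x \<in> F}" by (auto simp: weak_topspace)
  ultimately show ?thesis unfolding closedin_def by (simp add: weak_topspace)
qed

lemma hb_norm_bounded:
  fixes p :: "'x::real_normed_vector \<Rightarrow> real"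
  assumes padd: "\<And>x y. p (x + y) \<le> p x + p y"
    and phom: "\<And>c x. c \<ge> 0 \<Longrightarrow> p (c *\<^sub>R x) = c * p x"
    and pn: "\<And>x. p x \<le> norm x"
  shows "\<exists>l. bounded_linear l \<and> (\<forall>x. l x \<le> p x) \<and> (\<forall>x. \<bar>l x\<bar> \<le> norm x) \<and> l y = p y"
proof -
  obtain l where ladd: "\<And>x y. l (x + y) = l x + l y" and lsc: "\<And>c x. l (c *\<^sub>R x) = c * l x"
    and lp: "\<And>x. l x \<le> p x" and ly: "l y = p y"
    using hb_sublinear[OF padd phom] by metis
  have lab: "\<bar>l x\<bar> \<le> norm x" for x
  proof -
    have "l x \<le> norm x" using lp pn order_trans by blast
    moreover have "- l x \<le> norm x" using lsc[of "-1" x] lp[of "-x"] pn[of "-x"] by simp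
    ultimately show ?thesis by simp
  qed
  have "bounded_linear l"
    by (rule bounded_linear_intro[where K=1]) (auto simp: ladd lsc lab)
  then show ?thesis using lp lab ly by blast
qed

lemma norming:
  fixes y :: "'x::real_normed_vector"
  shows "\<exists>l. bounded_linear l \<and> (\<forall>x. \<bar>l x\<bar> \<le> norm x) \<and> l y = norm y"
  using hb_norm_bounded[of norm y] by (auto intro: norm_triangle_ineq)

lemma weak_closed_ball:
  fixes c :: "'x::real_normed_vector"
  shows "closedin weak_topology {x. norm (x - c) \<le> r}"
proof -
  have "openin weak_topology (topspace weak_topology - {x. norm (x - c) \<le> r})"
  proof (subst openin_subopen, intro ballI)
    fix z assume "z \<in> topspace weak_topology - {x. norm (x - c) \<le> r}"
    then have zr: "norm (z - c) > r" by auto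
    obtain l where l: "bounded_linear l" "\<And>x. \<bar>l x\<bar> \<le> norm x" "l (z - c) = norm (z - c)"
      using norming by blast
    interpret bounded_linear l by fact
    let ?T = "{x. l x \<in> {l c + r <..}}"
    have "openin weak_topology ?T" using l(1) by (intro weak_open_preimage) auto
    moreover have "z \<in> ?T" using zr l(3) by (simp add: diff)
    moreover have "?T \<subseteq> topspace weak_topology - {x. norm (x - c) \<le> r}"
    proof
      fix x assume "x \<in> ?T"
      then have "l (x - c) > r" by (simp add: diff)
      then have "norm (x - c) > r" using l(2)[of "x - c"] by linarith
      then show "x \<in> topspace weak_topology - {x. norm (x - c) \<le> r}" by (auto simp: weak_topspace)
    qed
    ultimately show "\<exists>T. openin weak_topology T \<and> z \<in> T \<and> T \<subseteq> topspace weak_topology - {x. norm (x - c) \<le> r}"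
      by blast
  qed
  then show ?thesis unfolding closedin_def by (simp add: weak_topspace)
qed

lemma weak_closed_subspace:
  fixes Y :: "'x::real_normed_vector set"
  assumes Ycl: "closed Y" and Y0: "0 \<in> Y" and Yadd: "\<And>x y. x \<in> Y \<Longrightarrow> y \<in> Y \<Longrightarrow> x + y \<in> Y"
    and Ysc: "\<And>c x. x \<in> Y \<Longrightarrow> c *\<^sub>R x \<in> Y"
  shows "closedin weak_topology Y"
proof -
  let ?p = "\<lambda>x. infdist x Y"
  have Yne: "Y \<noteq> {}" using Y0 by blast
  have padd: "?p (x + y) \<le> ?p x + ?p y" for x y
  proof -
    have "?p (x + y) - dist y b \<le> dist x a" if "a \<in> Y" "b \<in> Y" for a b
    proof -
      have "?p (x + y) \<le> dist (x + y) (a + b)" using Yadd[OF that] by (rule infdist_le)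
      also have "\<dots> \<le> dist x a + dist y b" unfolding dist_norm
        using norm_triangle_ineq[of "x - a" "y - b"] by (simp add: algebra_simps)
      finally show ?thesis by simp
    qed
    then have "?p (x + y) - dist y b \<le> ?p x" if "b \<in> Y" for b
      using that Yne unfolding infdist_def by (auto intro!: cINF_greatest)
    then have "?p (x + y) - ?p x \<le> dist y b" if "b \<in> Y" for b using that by (smt (verit))
    then have "?p (x + y) - ?p x \<le> ?p y" 
      using Yne unfolding infdist_def[of y] by (auto intro!: cINF_greatest)
    then show ?thesis by simp
  qed
  have phom: "?p (c *\<^sub>R x) = c * ?p x" if c: "c \<ge> 0" for c x
  proof (cases "c = 0")
    case True then show ?thesis using Y0 infdist_zero[OF Y0] by simp
  next
    case False
    then have c: "c > 0" using c by simp
    have "?p (c *\<^sub>R x) \<le> c * dist x a" if "a \<in> Y" for a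
    proof -
      have "?p (c *\<^sub>R x) \<le> dist (c *\<^sub>R x) (c *\<^sub>R a)" using Ysc[OF that] by (rule infdist_le)
      also have "\<dots> = c * dist x a" using c unfolding dist_norm
        by (simp add: scaleR_diff_right[symmetric])
      finally show ?thesis .
    qed
    then have "?p (c *\<^sub>R x) / c \<le> dist x a" if "a \<in> Y" for a
      using that c by (simp add: divide_le_eq mult.commute)
    then have 1: "?p (c *\<^sub>R x) / c \<le> ?p x" using Yne unfolding infdist_def[of x] 
      by (auto intro!: cINF_greatest)
    have "?p x \<le> (1/c) * dist (c *\<^sub>R x) a" if "a \<in> Y" for a
    proof -
      have "?p x \<le> dist x ((1/c) *\<^sub>R a)" using Ysc[OF that] by (rule infdist_le)
      also have "\<dots> = (1/c) * dist (c *\<^sub>R x) a" using c unfolding dist_norm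
      proof -
        have "x - (1/c) *\<^sub>R a = (1/c) *\<^sub>R (c *\<^sub>R x - a)" using c by (simp add: scaleR_diff_right)
        then show "norm (x - (1/c) *\<^sub>R a) = (1/c) * norm (c *\<^sub>R x - a)" using c by simp
      qed
      finally show ?thesis .
    qed
    then have "c * ?p x \<le> dist (c *\<^sub>R x) a" if "a \<in> Y" for a
      using that c by (simp add: field_simps)
    then have 2: "c * ?p x \<le> ?p (c *\<^sub>R x)" using Yne unfolding infdist_def[of "c *\<^sub>R x"]
      by (auto intro!: cINF_greatest)
    from 1 2 c show ?thesis by (simp add: divide_le_eq mult.commute)
  qed
  have pn: "?p x \<le> norm x" for x using infdist_le[OF Y0, of x] by simp
  have "openin weak_topology (topspace weak_topology - Y)"
  proof (subst openin_subopen, intro ballI)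
    fix z assume "z \<in> topspace weak_topology - Y"
    then have zY: "z \<notin> Y" by auto
    obtain l where l: "bounded_linear l" "\<And>x. l x \<le> ?p x" "l z = ?p z"
      using hb_norm_bounded[of ?p z, OF padd phom pn] by blast
    interpret bounded_linear l by fact
    have lY: "l y = 0" if "y \<in> Y" for y
    proof -
      have "l y \<le> 0" using l(2)[of y] infdist_zero[OF that] by simp
      moreover have "- l y \<le> 0" using l(2)[of "-y"] infdist_zero[OF Ysc[OF that, of "-1"]] using scaleR[of "-1" y] by simp
      ultimately show ?thesis by simp
    qed
    have zpos: "l z > 0" using l(3) infdist_pos_not_in_closed[OF Ycl Yne zY] by simp
    let ?T = "{x. l x \<in> {0 <..}}"
    have "openin weak_topology ?T" using l(1) by (intro weak_open_preimage) auto
    moreover have "z \<in> ?T" using zpos by simp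
    moreover have "?T \<subseteq> topspace weak_topology - Y" using lY by (force simp: weak_topspace)
    ultimately show "\<exists>T. openin weak_topology T \<and> z \<in> T \<and> T \<subseteq> topspace weak_topology - Y"
      by blast
  qed
  then show ?thesis unfolding closedin_def by (simp add: weak_topspace)
qed

definition goodk :: "(nat \<Rightarrow> nat \<Rightarrow> real) \<Rightarrow> (nat \<Rightarrow> real) \<Rightarrow> nat \<Rightarrow> real \<Rightarrow> nat \<Rightarrow> bool" where
  "goodk a t J e k \<longleftrightarrow> (\<forall>i<J. \<bar>a i k - t i\<bar> < e)"

definition Qp :: "(nat \<Rightarrow> nat \<Rightarrow> real) \<Rightarrow> (nat \<Rightarrow> real) \<Rightarrow> nat \<Rightarrow> real \<Rightarrow> bool" where
  "Qp a t J q \<longleftrightarrow> (\<forall>e>0. \<forall>K. \<exists>k\<ge>K. goodk a t J e k \<and> q < a J k)"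

fun ttl :: "(nat \<Rightarrow> nat \<Rightarrow> real) \<Rightarrow> nat \<Rightarrow> real list" where
  "ttl a 0 = []"
| "ttl a (Suc J) = ttl a J @ [Sup {q. Qp a (\<lambda>i. ttl a J ! i) J q}]"

definition tt :: "(nat \<Rightarrow> nat \<Rightarrow> real) \<Rightarrow> nat \<Rightarrow> real" where
  "tt a J = ttl a (Suc J) ! J"

lemma length_ttl[simp]: "length (ttl a J) = J"
  by (induction J) auto

lemma ttl_nth: "i < J \<Longrightarrow> ttl a J ! i = tt a i"
proof (induction J)
  case 0 then show ?case by simp
next
  case (Suc J)
  show ?case
  proof (cases "i < J")
    case True then show ?thesis using Suc by (simp add: nth_append)
  next
    case False then have "i = J" using Suc by simp
    then show ?thesis by (simp add: tt_def)
  qed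
qed

lemma goodk_cong: "(\<And>i. i < J \<Longrightarrow> t i = t' i) \<Longrightarrow> goodk a t J e k = goodk a t' J e k"
  unfolding goodk_def by auto

lemma tt_eq: "tt a J = Sup {q. Qp a (tt a) J q}"
proof -
  have *: "Qp a (\<lambda>i. ttl a J ! i) J q = Qp a (tt a) J q" for q
    unfolding Qp_def using goodk_cong[of J "\<lambda>i. ttl a J ! i" "tt a"] ttl_nth by auto
  have "tt a J = Sup {q. Qp a (\<lambda>i. ttl a J ! i) J q}" unfolding tt_def by (simp add: nth_append)
  also have "{q. Qp a (\<lambda>i. ttl a J ! i) J q} = {q. Qp a (tt a) J q}" using * by blast
  finally show ?thesis .
qed

lemma Qp_get: "Qp a t J q \<Longrightarrow> e > 0 \<Longrightarrow> \<exists>k\<ge>K. goodk a t J e k \<and> q < a J k"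
  unfolding Qp_def by blast

lemma goodk_mono: "goodk a t J e k \<Longrightarrow> J' \<le> J \<Longrightarrow> e \<le> e' \<Longrightarrow> goodk a t J' e' k"
  unfolding goodk_def
proof (intro allI impI)
  fix i assume "\<forall>i<J. \<bar>a i k - t i\<bar> < e" "J' \<le> J" "e \<le> e'" "i < J'"
  then show "\<bar>a i k - t i\<bar> < e'" by (meson less_le_trans)
qed

lemma tt_props:
  assumes bnd: "\<And>m. \<exists>B. \<forall>k. \<bar>a m k\<bar> \<le> B"
  shows "\<forall>e>0. \<forall>K. \<exists>k\<ge>K. goodk a (tt a) J e k"
proof (induction J)
  case 0 then show ?case unfolding goodk_def by auto
next
  case (Suc J)
  note IH = Suc
  obtain B where B: "\<And>k. \<bar>a J k\<bar> \<le> B" using bnd by blast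
  let ?Q = "{q. Qp a (tt a) J q}"
  have Qne: "-B-1 \<in> ?Q" unfolding Qp_def
  proof (intro CollectI allI impI)
    fix e K assume "(e::real) > 0"
    then obtain k where "k \<ge> K" "goodk a (tt a) J e k" using IH by blast
    moreover have "-B-1 < a J k" using B[of k] by linarith
    ultimately show "\<exists>k\<ge>K. goodk a (tt a) J e k \<and> - B - 1 < a J k" by blast
  qed
  have Qbdd: "bdd_above ?Q"
  proof (rule bdd_aboveI)
    fix q assume "q \<in> ?Q"
    then have "Qp a (tt a) J q" by simp
    from Qp_get[OF this zero_less_one] obtain k where "q < a J k" by blast
    then show "q \<le> B" using B[of k] by linarith
  qed
  have tJ: "tt a J = Sup ?Q" by (rule tt_eq)
  show ?case
  proof (intro allI impI)
    fix e :: real and K assume e: "e > 0"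
    have "tt a J - e/2 < Sup ?Q" using e tJ by simp
    then have "\<exists>q\<in>?Q. tt a J - e/2 < q" using less_cSup_iff[of ?Q] Qne Qbdd by blast
    then obtain q where q: "q \<in> ?Q" "tt a J - e/2 < q" by blast
    have "tt a J + e/2 \<notin> ?Q"
    proof
      assume "tt a J + e/2 \<in> ?Q"
      then have "tt a J + e/2 \<le> Sup ?Q" using Qbdd by (intro cSup_upper)
      then show False using tJ e by simp
    qed
    then have "\<not> Qp a (tt a) J (tt a J + e/2)" by simp
    then obtain e0 K0 where e0: "e0 > 0" and K0': "\<forall>k\<ge>K0. \<not> (goodk a (tt a) J e0 k \<and> tt a J + e/2 < a J k)"
      unfolding Qp_def by blast
    have K0: "a J k \<le> tt a J + e/2" if "k \<ge> K0" "goodk a (tt a) J e0 k" for k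
      using K0' that by (meson not_less)
    define e1 where "e1 = min e e0"
    have e1: "e1 > 0" using e e0 by (simp add: e1_def)
    from q(1) have "Qp a (tt a) J q" by simp
    from Qp_get[OF this e1] have "\<exists>k\<ge>max K K0. goodk a (tt a) J e1 k \<and> q < a J k" .
    then obtain k where k: "k \<ge> max K K0" "goodk a (tt a) J e1 k" "q < a J k" by blast
    have "goodk a (tt a) J e0 k" using k(2) by (rule goodk_mono) (auto simp: e1_def)
    then have up: "a J k \<le> tt a J + e/2" using K0 k(1) by simp
    have "goodk a (tt a) (Suc J) e k" unfolding goodk_def
    proof (intro allI impI)
      fix i assume "i < Suc J"
      then show "\<bar>a i k - tt a i\<bar> < e"
      proof (cases "i < J")
        case True then show ?thesis using k(2) unfolding goodk_def e1_def by force
      next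
        case False then have "i = J" using \<open>i < Suc J\<close> by simp
        then show ?thesis using up q(2) k(3) e by auto
      qed
    qed
    then show "\<exists>k\<ge>K. goodk a (tt a) (Suc J) e k" using k(1) by auto
  qed
qed

lemma tt_less_iff:
  assumes bnd: "\<And>m. \<exists>B. \<forall>k. \<bar>a m k\<bar> \<le> B"
  shows "c < tt a J \<longleftrightarrow> (\<exists>q\<in>\<rat>. c < q \<and> Qp a (tt a) J q)"
proof -
  obtain B where B: "\<And>k. \<bar>a J k\<bar> \<le> B" using bnd by blast
  let ?Q = "{q. Qp a (tt a) J q}"
  have Qne: "-B-1 \<in> ?Q" unfolding Qp_def
  proof (intro CollectI allI impI)
    fix e K assume "(e::real) > 0"
    then obtain k where "k \<ge> K" "goodk a (tt a) J e k" using tt_props[of a, OF bnd] by blast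
    moreover have "-B-1 < a J k" using B[of k] by linarith
    ultimately show "\<exists>k\<ge>K. goodk a (tt a) J e k \<and> - B - 1 < a J k" by blast
  qed
  have Qbdd: "bdd_above ?Q"
  proof (rule bdd_aboveI)
    fix q assume "q \<in> ?Q"
    then have "Qp a (tt a) J q" by simp
    from Qp_get[OF this zero_less_one] obtain k where "q < a J k" by blast
    then show "q \<le> B" using B[of k] by linarith
  qed
  have down: "Qp a (tt a) J q'" if "Qp a (tt a) J q" "q' \<le> q" for q q'
    unfolding Qp_def
  proof (intro allI impI)
    fix e :: real and K assume "e > 0"
    from Qp_get[OF that(1) this] obtain k where "k \<ge> K" "goodk a (tt a) J e k" "q < a J k" by blast
    moreover have "q' < a J k" using that(2) \<open>q < a J k\<close> by linarith
    ultimately show "\<exists>k\<ge>K. goodk a (tt a) J e k \<and> q' < a J k" by blast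
  qed
  show ?thesis
  proof
    assume "c < tt a J"
    then have "c < Sup ?Q" using tt_eq[of a J] by simp
    then have "\<exists>q\<in>?Q. c < q" using less_cSup_iff[of ?Q] Qne Qbdd by blast
    then obtain q where q: "q \<in> ?Q" "c < q" by blast
    obtain r where r: "r \<in> \<rat>" "c < r" "r < q" using Rats_dense_in_real[OF q(2)] by blast
    have "Qp a (tt a) J r" using down[of q r] q(1) r(3) by simp
    then show "\<exists>q\<in>\<rat>. c < q \<and> Qp a (tt a) J q" using r by blast
  next
    assume "\<exists>q\<in>\<rat>. c < q \<and> Qp a (tt a) J q"
    then obtain q where "c < q" "q \<in> ?Q" by blast
    then have "c < q" "q \<le> Sup ?Q" using Qbdd by (auto intro: cSup_upper)
    then have "c < Sup ?Q" by linarith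
    then show "c < tt a J" using tt_eq[of a J] by simp
  qed
qed

lemma real_le_all_inv:
  fixes d :: real
  assumes "\<And>J. J \<ge> m \<Longrightarrow> \<bar>d\<bar> \<le> 1 / real (Suc J)"
  shows "d = 0"
proof (rule ccontr)
  assume "d \<noteq> 0"
  then have dp: "\<bar>d\<bar> > 0" by simp
  obtain n :: nat where n: "1 / \<bar>d\<bar> < real n" using reals_Archimedean2 by blast
  define J where "J = max m n"
  have "\<bar>d\<bar> \<le> 1 / real (Suc J)" using assms by (simp add: J_def)
  moreover have "1 / real (Suc J) < \<bar>d\<bar>"
  proof -
    have "1 / \<bar>d\<bar> < real (Suc J)" using n by (simp add: J_def)
    then show ?thesis using dp by (simp add: divide_less_eq mult.commute)
  qed
  ultimately show False by simp
qed

lemma cluster_exists: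
  fixes x :: "nat \<Rightarrow> 'x::real_normed_vector"
  assumes W: "compactin weak_topology W" and xW: "\<And>k. x k \<in> W"
    and l: "\<And>m. bounded_linear (l m)"
    and bnd: "\<And>m. \<exists>B. \<forall>k. \<bar>l m (x k)\<bar> \<le> B"
  shows "\<exists>z\<in>W. (\<forall>m. l m z = tt (\<lambda>m k. l m (x k)) m) \<and> (\<forall>K. z \<in> weak_topology closure_of (x ` {K..}))"
proof -
  define a where "a = (\<lambda>m k. l m (x k))"
  have bnda: "\<And>m. \<exists>B. \<forall>k. \<bar>a m k\<bar> \<le> B" using bnd by (simp add: a_def)
  note inf = tt_props[of a, OF bnda]
  define C where "C = (\<lambda>(J,K). weak_topology closure_of (x ` {k. K \<le> k \<and> goodk a (tt a) J (1 / real (Suc J)) k}))"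
  define U where "U = range C"
  have "W \<inter> \<Inter>U \<noteq> {}"
  proof -
    have clo: "\<forall>C\<in>U. closedin weak_topology C" unfolding U_def C_def by auto
    have fip: "\<forall>F. finite F \<and> F \<subseteq> U \<longrightarrow> W \<inter> \<Inter>F \<noteq> {}"
    proof (intro allI impI)
      fix F assume F: "finite F \<and> F \<subseteq> U"
      then obtain I where I: "finite I" "F = C ` I" unfolding U_def by (meson finite_subset_image)
      define n where "n = Max (insert 0 (fst ` I \<union> snd ` I))"
      have nJ: "fst p \<le> n" "snd p \<le> n" if "p \<in> I" for p
        using that I(1) unfolding n_def by (auto intro!: Max_ge)
      have "\<exists>k\<ge>n. goodk a (tt a) n (1 / real (Suc n)) k" using inf[of n, rule_format, of "1 / real (Suc n)" n] by simp
      then obtain k where k: "k \<ge> n" "goodk a (tt a) n (1 / real (Suc n)) k" by blast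
      have "x k \<in> C p" if "p \<in> I" for p
      proof -
        obtain J K where p: "p = (J,K)" by (cases p)
        have "J \<le> n" "K \<le> n" using nJ[OF that] p by auto
        moreover have "1 / real (Suc n) \<le> 1 / real (Suc J)" using \<open>J \<le> n\<close> by (simp add: divide_simps)
        ultimately have "goodk a (tt a) J (1 / real (Suc J)) k" using k(2) goodk_mono by blast
        then have "x k \<in> x ` {k. K \<le> k \<and> goodk a (tt a) J (1 / real (Suc J)) k}" using k(1) \<open>K \<le> n\<close> by auto
        moreover have "x ` {k. K \<le> k \<and> goodk a (tt a) J (1 / real (Suc J)) k} \<subseteq> weak_topology closure_of (x ` {k. K \<le> k \<and> goodk a (tt a) J (1 / real (Suc J)) k})"
          by (rule closure_of_subset) (simp add: weak_topspace)
        ultimately show ?thesis unfolding p C_def by auto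
      qed
      then show "W \<inter> \<Inter>F \<noteq> {}" using xW I(2) by blast
    qed
    from W have "\<forall>\<U>. (\<forall>C\<in>\<U>. closedin weak_topology C) \<and> (\<forall>\<F>. finite \<F> \<and> \<F> \<subseteq> \<U> \<longrightarrow> W \<inter> \<Inter>\<F> \<noteq> {}) \<longrightarrow> W \<inter> \<Inter>\<U> \<noteq> {}"
      unfolding compactin_fip by (rule conjunct2)
    then show ?thesis using clo fip by blast
  qed
  then obtain z where zW: "z \<in> W" and zU: "z \<in> \<Inter>U" by blast
  have zC: "z \<in> C (J,K)" for J K using zU unfolding U_def by blast
  have "l m z = tt a m" for m
  proof -
    have "\<bar>l m z - tt a m\<bar> \<le> 1 / real (Suc J)" if "J \<ge> Suc m" for J
    proof -
      let ?S = "{y. l m y \<in> cball (tt a m) (1 / real (Suc J))}"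
      have "closedin weak_topology ?S" using l by (intro weak_closed_preimage) auto
      moreover have "x ` {k. 0 \<le> k \<and> goodk a (tt a) J (1 / real (Suc J)) k} \<subseteq> ?S"
      proof
        fix y assume "y \<in> x ` {k. 0 \<le> k \<and> goodk a (tt a) J (1 / real (Suc J)) k}"
        then obtain k where "y = x k" "goodk a (tt a) J (1 / real (Suc J)) k" by blast
        then have "\<bar>a m k - tt a m\<bar> < 1 / real (Suc J)" using that unfolding goodk_def by simp
        then show "y \<in> ?S" using \<open>y = x k\<close> unfolding a_def by (simp add: dist_real_def abs_minus_commute)
      qed
      ultimately have "weak_topology closure_of (x ` {k. 0 \<le> k \<and> goodk a (tt a) J (1 / real (Suc J)) k}) \<subseteq> ?S"
        by (intro closure_of_minimal)
      then have "C (J,0) \<subseteq> ?S" unfolding C_def by simp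
      then show ?thesis using zC[of J 0] by (auto simp: dist_real_def abs_minus_commute)
    qed
    then show ?thesis using real_le_all_inv[of "Suc m" "l m z - tt a m"] by simp
  qed
  moreover have "z \<in> weak_topology closure_of (x ` {K..})" for K
  proof -
    have "C (0,K) \<subseteq> weak_topology closure_of (x ` {K..})" unfolding C_def goodk_def
      by (auto intro!: closure_of_mono)
    then show ?thesis using zC by blast
  qed
  ultimately show ?thesis using zW unfolding a_def by blast
qed

lemma tt_measurable:
  fixes a :: "'a \<Rightarrow> nat \<Rightarrow> nat \<Rightarrow> real"
  assumes am[measurable]: "\<And>m k. (\<lambda>s. a s m k) \<in> borel_measurable M"
    and bnd: "\<And>s m. \<exists>B. \<forall>k. \<bar>a s m k\<bar> \<le> B"
  shows "(\<lambda>s. tt (a s) J) \<in> borel_measurable M"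
proof (induction J rule: less_induct)
  case (less J)
  define T where "T i s = (if i < J then tt (a s) i else 0)" for i s
  have Tm[measurable]: "T i \<in> borel_measurable M" for i 
    using less by (cases "i<J") (simp_all add: T_def[abs_def])
  have Qeq: "Qp (a s) (tt (a s)) J q \<longleftrightarrow> (\<forall>n::nat. \<forall>K::nat. \<exists>k. K \<le> k \<and> (\<forall>i\<in>{..<J}. \<bar>a s i k - T i s\<bar> < 1/real(Suc n)) \<and> q < a s J k)" for q s
  proof
    assume Q: "Qp (a s) (tt (a s)) J q"
    show "\<forall>n::nat. \<forall>K::nat. \<exists>k. K \<le> k \<and> (\<forall>i\<in>{..<J}. \<bar>a s i k - T i s\<bar> < 1/real(Suc n)) \<and> q < a s J k"
    proof (intro allI)
      fix n K
      from Qp_get[OF Q, of "1/real(Suc n)" K] obtain k where "k \<ge> K" "goodk (a s) (tt (a s)) J (1/real(Suc n)) k" "q < a s J k"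
        by auto
      then show "\<exists>k. K \<le> k \<and> (\<forall>i\<in>{..<J}. \<bar>a s i k - T i s\<bar> < 1/real(Suc n)) \<and> q < a s J k"
        unfolding goodk_def T_def by auto
    qed
  next
    assume R: "\<forall>n::nat. \<forall>K::nat. \<exists>k. K \<le> k \<and> (\<forall>i\<in>{..<J}. \<bar>a s i k - T i s\<bar> < 1/real(Suc n)) \<and> q < a s J k"
    show "Qp (a s) (tt (a s)) J q" unfolding Qp_def
    proof (intro allI impI)
      fix e :: real and K assume e: "e > 0"
      obtain n where n: "1 / real (Suc n) < e" using reals_Archimedean[OF e] by (auto simp: divide_inverse)
      from R obtain k where k: "K \<le> k" "\<forall>i\<in>{..<J}. \<bar>a s i k - T i s\<bar> < 1/real(Suc n)" "q < a s J k" by blast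
      have "goodk (a s) (tt (a s)) J e k" unfolding goodk_def
      proof (intro allI impI)
        fix i assume "i < J"
        then have "\<bar>a s i k - tt (a s) i\<bar> < 1/real(Suc n)" using k(2) by (simp add: T_def)
        then show "\<bar>a s i k - tt (a s) i\<bar> < e" using n by linarith
      qed
      then show "\<exists>k\<ge>K. goodk (a s) (tt (a s)) J e k \<and> q < a s J k" using k by blast
    qed
  qed
  have eq: "c < tt (a s) J \<longleftrightarrow> (\<exists>r::rat. c < of_rat r \<and> (\<forall>n::nat. \<forall>K::nat. \<exists>k. K \<le> k \<and> (\<forall>i\<in>{..<J}. \<bar>a s i k - T i s\<bar> < 1/real(Suc n)) \<and> of_rat r < a s J k))" for c s
  proof -
    have "c < tt (a s) J \<longleftrightarrow> (\<exists>q\<in>\<rat>. c < q \<and> Qp (a s) (tt (a s)) J q)" 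
      by (rule tt_less_iff) (rule bnd)
    also have "\<dots> \<longleftrightarrow> (\<exists>r::rat. c < of_rat r \<and> Qp (a s) (tt (a s)) J (of_rat r))"
      unfolding Rats_def by blast
    finally show ?thesis unfolding Qeq .
  qed
  show ?case
    by (rule borel_measurableI_greater) (unfold eq, measurable)
qed

fun idxf :: "('a \<Rightarrow> 'x::real_normed_vector) \<Rightarrow> (nat \<Rightarrow> 'x) \<Rightarrow> nat \<Rightarrow> 'a \<Rightarrow> nat" where
  "idxf g d 0 s = 0"
| "idxf g d (Suc j) s = (if norm (g s - d (Suc j)) < norm (g s - d (idxf g d j s)) then Suc j else idxf g d j s)"

lemma idxf_le: "idxf g d j s \<le> j"
  by (induction j) auto

lemma idxf_min: "i \<le> j \<Longrightarrow> norm (g s - d (idxf g d j s)) \<le> norm (g s - d i)"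
proof (induction j)
  case 0 then show ?case by simp
next
  case (Suc j)
  show ?case
  proof (cases "i = Suc j")
    case True then show ?thesis by auto
  next
    case False then have "i \<le> j" using Suc by simp
    then show ?thesis using Suc by auto
  qed
qed

lemma strongly_measurable_from_dist:
  fixes g :: "'a \<Rightarrow> 'x::real_normed_vector" and d :: "nat \<Rightarrow> 'x"
  assumes dm[measurable]: "\<And>j. (\<lambda>s. norm (g s - d j)) \<in> borel_measurable M"
    and dense: "\<And>s. s \<in> space M \<Longrightarrow> g s \<in> closure (range d)"
  shows "strongly_measurable M g"
proof -
  have idxm[measurable]: "idxf g d j \<in> M \<rightarrow>\<^sub>M count_space UNIV" for j
  proof (induction j)
    case 0 then show ?case by simp
  next
    case (Suc j)
    note [measurable] = Suc
    have "(\<lambda>s. norm (g s - d (idxf g d j s))) \<in> borel_measurable M"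
      by (rule measurable_compose_countable[where f="\<lambda>i s. norm (g s - d i)"]) (auto intro: Suc)
    then have [measurable]: "Measurable.pred M (\<lambda>s. norm (g s - d (Suc j)) < norm (g s - d (idxf g d j s)))"
      by measurable
    show ?case unfolding idxf.simps by measurable
  qed
  define h where "h j s = d (idxf g d j s)" for j s
  have hs: "simple_function M (h j)" for j
    unfolding simple_function_eq_measurable
  proof
    have "h j ` space M \<subseteq> d ` {..j}" unfolding h_def using idxf_le[of g d j] by (auto intro!: imageI)
    then show "finite (h j ` space M)" by (rule finite_subset) simp
    show "h j \<in> M \<rightarrow>\<^sub>M count_space UNIV" unfolding h_def
      by (rule measurable_compose[OF idxm]) simp
  qed
  have conv: "(\<lambda>j. h j s) \<longlonglongrightarrow> g s" if s: "s \<in> space M" for s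
    unfolding LIMSEQ_iff
  proof (intro allI impI)
    fix r :: real assume r: "r > 0"
    obtain y where y: "y \<in> range d" "dist y (g s) < r" using dense[OF s] r closure_approachable by blast
    then obtain i where i: "y = d i" by blast
    have "norm (h j s - g s) < r" if "j \<ge> i" for j
    proof -
      have "norm (h j s - g s) = norm (g s - d (idxf g d j s))" unfolding h_def by (simp add: norm_minus_commute)
      also have "\<dots> \<le> norm (g s - d i)" by (rule idxf_min[OF that])
      also have "\<dots> < r" using y i by (simp add: dist_norm norm_minus_commute)
      finally show ?thesis .
    qed
    then show "\<exists>no. \<forall>n\<ge>no. norm (h n s - g s) < r" by blast
  qed
  show ?thesis unfolding strongly_measurable_def
    using hs conv by (intro exI[of _ h]) (auto intro!: AE_I2)
qed

definition dlist :: "(nat \<Rightarrow> 'x::real_normed_vector) \<Rightarrow> (rat \<times> nat) list \<Rightarrow> 'x" where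
  "dlist vv xs = sum_list (map (\<lambda>(q,n). of_rat q *\<^sub>R vv n) xs)"

lemma dlist_append: "dlist vv (xs @ ys) = dlist vv xs + dlist vv ys"
  unfolding dlist_def by simp

lemma dlist_scale: "dlist vv (map (\<lambda>(q,n). (r*q, n)) xs) = of_rat r *\<^sub>R dlist vv xs"
  unfolding dlist_def
proof (induction xs)
  case Nil then show ?case by simp
next
  case (Cons p xs)
  obtain q n where p: "p = (q,n)" by (cases p)
  have "of_rat (r * q) *\<^sub>R vv n = of_rat r *\<^sub>R (of_rat q *\<^sub>R vv n)" by (simp add: of_rat_mult)
  then show ?case using Cons p by (simp add: scaleR_add_right)
qed

lemma closure_add_closed:
  fixes S :: "'x::real_normed_vector set"
  assumes "\<And>x y. x \<in> S \<Longrightarrow> y \<in> S \<Longrightarrow> x + y \<in> S" "x \<in> closure S" "y \<in> closure S"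
  shows "x + y \<in> closure S"
proof -
  obtain f where f: "\<And>n. f n \<in> S" "f \<longlonglongrightarrow> x" using assms(2) unfolding closure_sequential by blast
  obtain g where g: "\<And>n. g n \<in> S" "g \<longlonglongrightarrow> y" using assms(3) unfolding closure_sequential by blast
  have "(\<lambda>n. f n + g n) \<longlonglongrightarrow> x + y" using f(2) g(2) by (rule tendsto_add)
  moreover have "\<forall>n. f n + g n \<in> S" using f(1) g(1) assms(1) by blast
  ultimately show ?thesis unfolding closure_sequential by (intro exI[of _ "\<lambda>n. f n + g n"]) simp
qed

lemma rat_seq: "\<exists>q::nat \<Rightarrow> rat. (\<lambda>n. real_of_rat (q n)) \<longlonglongrightarrow> (c::real)"
proof -
  have "\<forall>n. \<exists>r::rat. \<bar>real_of_rat r - c\<bar> < 1 / real (Suc n)"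
  proof
    fix n
    have "c < c + 1 / real (Suc n)" by simp
    then obtain x where "x \<in> \<rat>" "c < x" "x < c + 1 / real (Suc n)" using Rats_dense_in_real by blast
    then obtain r where "x = real_of_rat r" unfolding Rats_def by blast
    then show "\<exists>r::rat. \<bar>real_of_rat r - c\<bar> < 1 / real (Suc n)" using \<open>c < x\<close> \<open>x < _\<close> by (intro exI[of _ r]) simp
  qed
  then have "\<exists>q. \<forall>n. \<bar>real_of_rat (q n) - c\<bar> < 1 / real (Suc n)" by (rule choice)
  then obtain q where q: "\<And>n. \<bar>real_of_rat (q n) - c\<bar> < 1 / real (Suc n)" by blast
  have "(\<lambda>n. real_of_rat (q n) - c) \<longlonglongrightarrow> 0"
  proof (rule LIMSEQ_I)
    fix r :: real assume r: "r > 0"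
    obtain n0 where n0: "inverse (real (Suc n0)) < r" using reals_Archimedean[OF r] by blast
    have "norm (real_of_rat (q n) - c - 0) < r" if "n \<ge> n0" for n
    proof -
      have "inverse (real (Suc n)) \<le> inverse (real (Suc n0))" using that by (intro le_imp_inverse_le) auto
      moreover have "\<bar>real_of_rat (q n) - c\<bar> < inverse (real (Suc n))" using q[of n] by (simp add: divide_inverse)
      ultimately have "\<bar>real_of_rat (q n) - c\<bar> < r" using n0 by linarith
      then show ?thesis by simp
    qed
    then show "\<exists>no. \<forall>n\<ge>no. norm (real_of_rat (q n) - c - 0) < r" by blast
  qed
  then have "(\<lambda>n. real_of_rat (q n)) \<longlonglongrightarrow> c" by (simp add: LIM_zero_iff)
  then show ?thesis by blast
qed

lemma dlist_closure_props:
  fixes vv :: "nat \<Rightarrow> 'x::real_normed_vector"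
  defines "Y \<equiv> closure (range (dlist vv))"
  shows "closed Y" "0 \<in> Y" "\<And>x y. x \<in> Y \<Longrightarrow> y \<in> Y \<Longrightarrow> x + y \<in> Y"
    "\<And>c x. x \<in> Y \<Longrightarrow> c *\<^sub>R x \<in> Y" "\<And>n. vv n \<in> Y"
proof -
  show "closed Y" unfolding Y_def by simp
  have "0 \<in> range (dlist vv)" by (rule range_eqI[of _ _ "[]"]) (simp add: dlist_def)
  then show "0 \<in> Y" unfolding Y_def by (rule subsetD[OF closure_subset])
  show "x + y \<in> Y" if "x \<in> Y" "y \<in> Y" for x y
    unfolding Y_def
  proof (rule closure_add_closed)
    fix a b assume ha: "a \<in> range (dlist vv)" and hb: "b \<in> range (dlist vv)"
    from ha obtain xs where xs: "a = dlist vv xs" by blast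
    from hb obtain ys where ys: "b = dlist vv ys" by blast
    have "a + b = dlist vv (xs @ ys)" using xs ys by (simp add: dlist_append)
    then show "a + b \<in> range (dlist vv)" by simp
  qed (use that in \<open>simp_all add: Y_def\<close>)
  show "vv n \<in> Y" for n
  proof -
    have "vv n \<in> range (dlist vv)" by (rule range_eqI[of _ _ "[(1,n)]"]) (simp add: dlist_def)
    then show ?thesis unfolding Y_def by (rule subsetD[OF closure_subset])
  qed
  show "c *\<^sub>R x \<in> Y" if "x \<in> Y" for c x
  proof -
    have "x \<in> closure (range (dlist vv))" using that by (simp add: Y_def)
    then have "\<exists>f. (\<forall>n. f n \<in> range (dlist vv)) \<and> f \<longlonglongrightarrow> x" by (simp only: closure_sequential)
    then obtain f where f: "\<And>n. f n \<in> range (dlist vv)" "f \<longlonglongrightarrow> x" by blast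
    obtain q where q: "(\<lambda>n. real_of_rat (q n)) \<longlonglongrightarrow> c" using rat_seq[of c] by (elim exE)
    have "(\<lambda>n. real_of_rat (q n) *\<^sub>R f n) \<longlonglongrightarrow> c *\<^sub>R x" using q f(2) by (rule tendsto_scaleR)
    moreover have "\<forall>n. real_of_rat (q n) *\<^sub>R f n \<in> range (dlist vv)"
    proof
      fix n
      from f(1)[of n] obtain xs where "f n = dlist vv xs" by (elim rangeE)
      then have "real_of_rat (q n) *\<^sub>R f n = dlist vv (map (\<lambda>(p,m). (q n * p, m)) xs)"
        by (simp add: dlist_scale)
      then show "real_of_rat (q n) *\<^sub>R f n \<in> range (dlist vv)" by simp
    qed
    ultimately show ?thesis unfolding Y_def closure_sequential
      by (intro exI[of _ "\<lambda>n. real_of_rat (q n) *\<^sub>R f n"]) simp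
  qed
qed

lemma norming_seq:
  fixes d :: "nat \<Rightarrow> 'x::real_normed_vector"
  assumes lb: "\<And>j x. \<bar>lf j x\<bar> \<le> norm x" and ld: "\<And>j. lf j (d j) = norm (d j)"
    and bl: "\<And>j. bounded_linear (lf j)"
    and z: "z \<in> closure (range d)"
  shows "c < norm z \<longleftrightarrow> (\<exists>i. c < \<bar>lf i z\<bar>)"
proof
  assume "\<exists>i. c < \<bar>lf i z\<bar>"
  then obtain i where "c < \<bar>lf i z\<bar>" by blast
  then show "c < norm z" using lb[of i z] by linarith
next
  assume c: "c < norm z"
  define e where "e = (norm z - c) / 2"
  have e: "e > 0" using c by (simp add: e_def)
  obtain y where y: "y \<in> range d" "dist y z < e" using z e closure_approachable by blast
  then obtain j where j: "y = d j" by blast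
  interpret bounded_linear "lf j" by (rule bl)
  have "lf j z = lf j (d j) - lf j (d j - z)" by (simp add: diff)
  then have "\<bar>lf j z\<bar> \<ge> norm (d j) - norm (d j - z)" using ld[of j] lb[of j "d j - z"] by linarith
  moreover have "norm (d j) \<ge> norm z - norm (d j - z)" using norm_triangle_ineq2[of z "d j"] 
    by (simp add: norm_minus_commute)
  moreover have "norm (d j - z) < e" using y j by (simp add: dist_norm)
  ultimately have "norm z - 2 * norm (d j - z) \<le> \<bar>lf j z\<bar>" "norm (d j - z) < e"
    by linarith+
  then have "norm z - 2 * norm (d j - z) \<le> \<bar>lf j z\<bar>" "2 * norm (d j - z) < norm z - c"
    using e_def by simp_all
  then have "c < \<bar>lf j z\<bar>" by linarith
  then show "\<exists>i. c < \<bar>lf i z\<bar>" by blast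
qed

lemma Linf_norm_props:
  fixes h :: "'a \<Rightarrow> 'x::real_normed_vector"
  assumes P: "prob_space M" and hb: "AE s in M. norm (h s) \<le> B"
  shows "AE s in M. norm (h s) \<le> Linf_norm M h" "Linf_norm M h \<ge> 0"
    "\<And>c. (AE s in M. norm (h s) \<le> c) \<Longrightarrow> Linf_norm M h \<le> c"
proof -
  interpret prob_space M by fact
  let ?S = "{B. AE s in M. norm (h s) \<le> B}"
  have Sne: "B \<in> ?S" using hb by simp
  have Sge: "b \<ge> 0" if "b \<in> ?S" for b
  proof (rule ccontr)
    assume nb: "\<not> b \<ge> 0"
    from that have "AE s in M. norm (h s) \<le> b" by simp
    then have "AE s in M. False" by (rule eventually_mono) (use nb in \<open>smt (verit) norm_ge_zero\<close>)
    then show False using AE_False by simp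
  qed
  have bdd: "bdd_below ?S" using Sge by (intro bdd_belowI) auto
  show le: "Linf_norm M h \<le> c" if "AE s in M. norm (h s) \<le> c" for c
    unfolding Linf_norm_def using that bdd by (intro cInf_lower) auto
  have ne: "?S \<noteq> {}" using Sne by blast
  show "Linf_norm M h \<ge> 0" unfolding Linf_norm_def using ne Sge by (intro cInf_greatest) auto
  have "\<forall>n::nat. AE s in M. norm (h s) \<le> Linf_norm M h + 1/real(Suc n)"
  proof
    fix n :: nat
    have "Inf ?S < Inf ?S + 1/real(Suc n)" by simp
    from cInf_lessD[OF ne this] obtain b where b: "b \<in> ?S" "b < Inf ?S + 1/real(Suc n)" by blast
    from b(1) have "AE s in M. norm (h s) \<le> b" by simp
    then show "AE s in M. norm (h s) \<le> Linf_norm M h + 1/real(Suc n)"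
      by (rule eventually_mono) (use b(2) in \<open>simp add: Linf_norm_def\<close>)
  qed
  then have "AE s in M. \<forall>n::nat. norm (h s) \<le> Linf_norm M h + 1/real(Suc n)" by (simp add: AE_all_countable)
  then show "AE s in M. norm (h s) \<le> Linf_norm M h"
  proof (rule eventually_mono)
    fix s assume H: "\<forall>n::nat. norm (h s) \<le> Linf_norm M h + 1/real(Suc n)"
    show "norm (h s) \<le> Linf_norm M h"
    proof (rule field_le_epsilon)
      fix e :: real assume "e > 0"
      then obtain n where n: "inverse (real (Suc n)) < e" using reals_Archimedean by blast
      have "norm (h s) \<le> Linf_norm M h + inverse (real (Suc n))" using H by (simp add: divide_inverse)
      then show "norm (h s) \<le> Linf_norm M h + e" using n by linarith
    qed
  qed
qed

lemma N_facts:
  fixes N :: "real^'n \<Rightarrow> real"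
  assumes "is_norm N" "monotonous N"
  shows "N x \<le> norm x * N (\<chi> i. 1)" "\<bar>x $ i\<bar> * N (axis i 1) \<le> N x" "N (axis i 1) > 0"
    "N x \<le> N y + N (x - y)" "N x \<ge> 0"
proof -
  have hom: "N (c *\<^sub>R x) = \<bar>c\<bar> * N x" for c x using assms(1) unfolding is_norm_def by blast
  have mono: "N t \<le> N s" if "\<And>i. \<bar>t $ i\<bar> \<le> \<bar>s $ i\<bar>" for t s using assms(2) that unfolding monotonous_def by blast
  have "N x \<le> N (norm x *\<^sub>R (\<chi> i. 1))" by (rule mono) (simp add: component_le_norm_cart)
  then show "N x \<le> norm x * N (\<chi> i. 1)" by (simp add: hom)
  have "N (\<bar>x $ i\<bar> *\<^sub>R axis i 1) \<le> N x" by (rule mono) (simp add: axis_def)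
  then show "\<bar>x $ i\<bar> * N (axis i 1) \<le> N x" by (simp add: hom)
  have "axis i (1::real) \<noteq> 0" by (simp add: axis_eq_0_iff)
  then show "N (axis i 1) > 0" using assms(1) unfolding is_norm_def by (metis order_le_less)
  have "N (y + (x - y)) \<le> N y + N (x - y)" using assms(1) unfolding is_norm_def by blast
  then show "N x \<le> N y + N (x - y)" by simp
  show "N x \<ge> 0" using assms(1) unfolding is_norm_def by blast
qed

theorem mainTheorem1:
  fixes M :: "'a measure" and N :: "real^'n \<Rightarrow> real"
    and W :: "'x::banach set" and f :: "'n \<Rightarrow> 'a \<Rightarrow> 'x"
  assumes "prob_space M" and "complete_measure M"
    and "is_norm N" and "monotonous N"
    and "weakly_compact W" and "W \<noteq> {}"
    and "\<forall>i. f i \<in> Linf M"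
  shows "\<exists>g0 \<in> Linf_on M W. \<forall>g \<in> Linf_on M W.
           N (\<chi> i. Linf_norm M (\<lambda>s. f i s - g0 s)) \<le> N (\<chi> i. Linf_norm M (\<lambda>s. f i s - g s))"
proof -
  note PS = assms(1)
  interpret P: prob_space M by fact
  note NF = N_facts[OF assms(3,4)]
  obtain w0 where w0: "w0 \<in> W" using assms(6) by blast
  have Wc: "compactin weak_topology W" using assms(5) unfolding weakly_compact_def .
  define \<Phi> where "\<Phi> g = N (\<chi> i. Linf_norm M (\<lambda>s. f i s - g s))" for g
  define LW where "LW = Linf_on M W"
  have fL: "strongly_measurable M (f i)" "\<exists>B. AE s in M. norm (f i s) \<le> B" for i
    using assms(7) unfolding Linf_def by auto
  obtain Bf where Bf: "\<And>i. AE s in M. norm (f i s) \<le> Bf i" using fL(2) by metis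
  have c0: "(\<lambda>_. w0) \<in> LW"
  proof -
    have "strongly_measurable M (\<lambda>_. w0)" unfolding strongly_measurable_def
      by (rule exI[of _ "\<lambda>_ _. w0"]) simp
    moreover have "AE s in M. norm w0 \<le> norm w0" by simp
    ultimately show ?thesis unfolding LW_def Linf_on_def Linf_def using w0 by auto
  qed
  have LWb: "\<exists>B. AE s in M. norm (g s) \<le> B" if "g \<in> LW" for g
    using that unfolding LW_def Linf_on_def Linf_def by auto
  have diffb: "AE s in M. norm (f i s - g s) \<le> Bf i + B" if "AE s in M. norm (g s) \<le> B" for g i B
  proof -
    have "AE s in M. norm (f i s) \<le> Bf i \<and> norm (g s) \<le> B" using Bf[of i] that by (simp add: eventually_conj_iff)
    then show ?thesis
    proof (rule eventually_mono)
      fix s assume "norm (f i s) \<le> Bf i \<and> norm (g s) \<le> B"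
      then show "norm (f i s - g s) \<le> Bf i + B" using norm_triangle_ineq4[of "f i s" "g s"] by linarith
    qed
  qed
  define m0 where "m0 = Inf (\<Phi> ` LW)"
  have bdd\<Phi>: "bdd_below (\<Phi> ` LW)" unfolding \<Phi>_def using NF(5) by (intro bdd_belowI) auto
  have m0le: "m0 \<le> \<Phi> g" if "g \<in> LW" for g unfolding m0_def using bdd\<Phi> that by (intro cInf_lower) auto
  have "\<forall>k::nat. \<exists>g\<in>LW. \<Phi> g < m0 + 1/real(Suc k)"
  proof
    fix k :: nat
    have ne: "\<Phi> ` LW \<noteq> {}" using c0 by blast
    have "m0 < m0 + 1/real(Suc k)" by simp
    from cInf_lessD[OF ne this[unfolded m0_def]] show "\<exists>g\<in>LW. \<Phi> g < m0 + 1/real(Suc k)"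
      unfolding m0_def by blast
  qed
  then obtain G where G: "\<And>k. G k \<in> LW" "\<And>k. \<Phi> (G k) < m0 + 1/real(Suc k)" by metis
  define rv where "rv k = (\<chi> i. Linf_norm M (\<lambda>s. f i s - G k s))" for k
  have rvP: "AE s in M. norm (f i s - G k s) \<le> rv k $ i" "rv k $ i \<ge> 0" for i k
  proof -
    obtain B where "AE s in M. norm (G k s) \<le> B" using LWb[OF G(1)] by blast
    from diffb[OF this, of i] have "AE s in M. norm (f i s - G k s) \<le> Bf i + B" .
    note LP = Linf_norm_props[OF PS this]
    show "AE s in M. norm (f i s - G k s) \<le> rv k $ i" "rv k $ i \<ge> 0" unfolding rv_def using LP(1,2) by simp_all
  qed
  have \<Phi>rv: "\<Phi> (G k) = N (rv k)" for k unfolding \<Phi>_def rv_def by simp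
  define C where "C = (\<Sum>i\<in>UNIV. (m0 + 1) / N (axis i 1))"
  have rvb: "norm (rv k) \<le> C" for k
  proof -
    have "norm (rv k) \<le> (\<Sum>i\<in>UNIV. \<bar>rv k $ i\<bar>)" by (rule norm_le_l1_cart)
    also have "\<dots> \<le> C" unfolding C_def
    proof (rule sum_mono)
      fix i
      have "\<bar>rv k $ i\<bar> * N (axis i 1) \<le> N (rv k)" by (rule NF(2))
      also have "N (rv k) \<le> m0 + 1"
      proof -
        have "1 / real (Suc k) \<le> 1" by (simp add: divide_simps)
        then show ?thesis using G(2)[of k] \<Phi>rv[of k] by linarith
      qed
      finally show "\<bar>rv k $ i\<bar> \<le> (m0 + 1) / N (axis i 1)" using NF(3)[of i] by (simp add: pos_le_divide_eq)
    qed
    finally show ?thesis .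
  qed
  have "bounded (range rv)" unfolding bounded_iff using rvb by blast
  then obtain r \<phi> where \<phi>: "strict_mono \<phi>" and conv: "(rv \<circ> \<phi>) \<longlonglongrightarrow> r"
    using bounded_imp_convergent_subsequence by blast
  define g where "g k = G (\<phi> k)" for k
  define rk where "rk k = rv (\<phi> k)" for k
  have rkconv: "rk \<longlonglongrightarrow> r" using conv unfolding rk_def comp_def by simp
  have gLW: "g k \<in> LW" for k unfolding g_def by (rule G(1))
  have Nr: "N r \<le> m0"
  proof (rule LIMSEQ_le_const)
    have "(\<lambda>k. r - rk k) \<longlonglongrightarrow> r - r" by (intro tendsto_diff tendsto_const rkconv)
    then have t0: "(\<lambda>k. norm (r - rk k)) \<longlonglongrightarrow> 0" using tendsto_norm_zero by force
    have "(\<lambda>k. m0 + inverse (real (Suc k)) + norm (r - rk k) * N (\<chi> i. 1)) \<longlonglongrightarrow> m0 + 0 + 0 * N (\<chi> i. 1)"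
      by (intro tendsto_intros LIMSEQ_inverse_real_of_nat t0)
    then show "(\<lambda>k. m0 + inverse (real (Suc k)) + norm (r - rk k) * N (\<chi> i. 1)) \<longlonglongrightarrow> m0" by simp
    show "\<exists>K. \<forall>k\<ge>K. N r \<le> m0 + inverse (real (Suc k)) + norm (r - rk k) * N (\<chi> i. 1)"
    proof (intro exI allI impI)
      fix k :: nat
      have "N r \<le> N (rk k) + N (r - rk k)" by (rule NF(4))
      also have "N (r - rk k) \<le> norm (r - rk k) * N (\<chi> i. 1)" by (rule NF(1))
      also have "N (rk k) < m0 + inverse (real (Suc k))"
      proof -
        have "N (rk k) < m0 + 1 / real (Suc (\<phi> k))" using G(2)[of "\<phi> k"] \<Phi>rv[of "\<phi> k"] unfolding rk_def by simp
        moreover have "inverse (real (Suc (\<phi> k))) \<le> inverse (real (Suc k))" using seq_suble[OF \<phi>, of k]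
          by (intro le_imp_inverse_le) auto
        ultimately show ?thesis unfolding divide_inverse by linarith
      qed
      finally show "N r \<le> m0 + inverse (real (Suc k)) + norm (r - rk k) * N (\<chi> i. 1)" by simp
    qed
  qed

  have "\<forall>k. \<exists>sq. (\<forall>m. simple_function M (sq m)) \<and> (AE s in M. (\<lambda>m. sq m s) \<longlonglongrightarrow> g k s)"
  proof
    fix k
    have "strongly_measurable M (g k)" using gLW[of k] unfolding LW_def Linf_on_def Linf_def by simp
    then show "\<exists>sq. (\<forall>m. simple_function M (sq m)) \<and> (AE s in M. (\<lambda>m. sq m s) \<longlonglongrightarrow> g k s)"
      unfolding strongly_measurable_def .
  qed
  then obtain sg where sg: "\<And>k m. simple_function M (sg k m)" "\<And>k. AE s in M. (\<lambda>m. sg k m s) \<longlonglongrightarrow> g k s"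
    by metis
  have gW: "AE s in M. g k s \<in> W" for k using gLW[of k] unfolding LW_def Linf_on_def by simp
  have rkAE: "AE s in M. norm (f i s - g k s) \<le> rk k $ i" for i k
    unfolding g_def rk_def by (rule rvP(1))
  have rk0: "rk k $ i \<ge> 0" for i k unfolding rk_def by (rule rvP(2))
  define Pgood where "Pgood s \<longleftrightarrow> (\<forall>k. (\<lambda>m. sg k m s) \<longlonglongrightarrow> g k s) \<and> (\<forall>k. g k s \<in> W)
      \<and> (\<forall>k. \<forall>i\<in>UNIV. norm (f i s - g k s) \<le> rk k $ i) \<and> (\<forall>i\<in>UNIV. norm (f i s) \<le> Bf i)" for s
  have A1: "AE s in M. \<forall>k. (\<lambda>m. sg k m s) \<longlonglongrightarrow> g k s" using sg(2) by (simp add: AE_all_countable)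
  have A2: "AE s in M. \<forall>k. g k s \<in> W" using gW by (simp add: AE_all_countable)
  have A3: "AE s in M. \<forall>k. \<forall>i\<in>UNIV. norm (f i s - g k s) \<le> rk k $ i"
    unfolding AE_all_countable by (intro allI AE_finite_allI rkAE) simp
  have A4: "AE s in M. \<forall>i\<in>UNIV. norm (f i s) \<le> Bf i" by (intro AE_finite_allI Bf) simp
  have "AE s in M. Pgood s" using A1 A2 A3 A4 unfolding Pgood_def by eventually_elim blast
  then obtain N0 where N0: "{s \<in> space M. \<not> Pgood s} \<subseteq> N0" "emeasure M N0 = 0" "N0 \<in> sets M"
    by (rule AE_E)
  define Gs where "Gs = space M - N0"
  have Gs_sets[measurable]: "Gs \<in> sets M" unfolding Gs_def using N0(3) by auto
  have Gs_good: "Pgood s" if "s \<in> Gs" for s using that N0(1) unfolding Gs_def by blast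
  have Gs_space: "s \<in> space M" if "s \<in> Gs" for s using that unfolding Gs_def by blast
  have Gc1: "(\<lambda>m. sg k m s) \<longlonglongrightarrow> g k s" if "s \<in> Gs" for s k using Gs_good[OF that] unfolding Pgood_def by simp
  have Gc2: "g k s \<in> W" if "s \<in> Gs" for s k using Gs_good[OF that] unfolding Pgood_def by simp
  have Gc3: "norm (f i s - g k s) \<le> rk k $ i" if "s \<in> Gs" for s k i using Gs_good[OF that] unfolding Pgood_def by simp
  have Gc4: "norm (f i s) \<le> Bf i" if "s \<in> Gs" for s i using Gs_good[OF that] unfolding Pgood_def by simp
  have AEGs: "AE s in M. s \<in> Gs"
  proof -
    have "AE s in M. s \<notin> N0" using N0(2,3) by (intro AE_not_in null_setsI)
    then show ?thesis unfolding Gs_def using AE_space by eventually_elim blast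
  qed
  define V where "V = insert 0 (\<Union>k. \<Union>m. sg k m ` space M)"
  have Vc: "countable V"
  proof -
    have "countable (sg k m ` space M)" for k m
      by (rule countable_finite) (rule simple_functionD(1)[OF sg(1)])
    then show ?thesis unfolding V_def by (intro countable_insert countable_UN) auto
  qed
  define vv where "vv = from_nat_into V"
  have rvv: "range vv = V" unfolding vv_def using Vc by (intro range_from_nat_into) (auto simp: V_def)
  define d where "d j = dlist vv (from_nat j)" for j
  define Y where "Y = closure (range (dlist vv))"
  have rd: "range d = range (dlist vv)"
  proof
    show "range d \<subseteq> range (dlist vv)" unfolding d_def by auto
    show "range (dlist vv) \<subseteq> range d"
    proof
      fix y assume "y \<in> range (dlist vv)"
      then obtain xs where "y = dlist vv xs" by blast
      then have "y = d (to_nat xs)" unfolding d_def by simp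
      then show "y \<in> range d" by simp
    qed
  qed
  have Yd: "closure (range d) = Y" unfolding Y_def rd ..
  note YP = dlist_closure_props[where vv=vv, folded Y_def]
  have Ywc: "closedin weak_topology Y" using YP(1-4) by (intro weak_closed_subspace) auto
  have Ydiff: "x - y \<in> Y" if "x \<in> Y" "y \<in> Y" for x y
  proof -
    have "x + (-1) *\<^sub>R y \<in> Y" using YP(3)[OF that(1) YP(4)[OF that(2)]] .
    then show ?thesis by simp
  qed
  have VY: "v \<in> Y" if "v \<in> V" for v
  proof -
    from that rvv obtain n where "v = vv n" by blast
    then show ?thesis using YP(5) by simp
  qed
  have gY: "g k s \<in> Y" if "s \<in> Gs" for k s
  proof (rule closed_sequentially[OF YP(1)])
    show "(\<lambda>m. sg k m s) \<longlonglongrightarrow> g k s" by (rule Gc1[OF that])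
    show "sg k m s \<in> Y" for m using Gs_space[OF that] by (intro VY) (auto simp: V_def)
  qed
  define lf where "lf j = (SOME l. bounded_linear l \<and> (\<forall>x. \<bar>l x\<bar> \<le> norm x) \<and> l (d j) = norm (d j))" for j
  have lfP: "bounded_linear (lf j) \<and> (\<forall>x. \<bar>lf j x\<bar> \<le> norm x) \<and> lf j (d j) = norm (d j)" for j
  proof -
    have "\<exists>l. bounded_linear l \<and> (\<forall>x. \<bar>l x\<bar> \<le> norm x) \<and> l (d j) = norm (d j)" by (rule norming)
    from someI_ex[OF this] show ?thesis unfolding lf_def .
  qed
  have lfbl: "bounded_linear (lf j)" and lfb: "\<bar>lf j x\<bar> \<le> norm x" and lfd: "lf j (d j) = norm (d j)" for j x
    using lfP by blast+
  define a where "a s m k = (if s \<in> Gs then lf m (g k s) else 0)" for s m k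
  have am: "(\<lambda>s. a s m k) \<in> borel_measurable M" for m k
  proof (rule borel_measurable_LIMSEQ_real)
    define u where "u n s = (if s \<in> Gs then lf m (sg k n s) else 0)" for n s
    show "(\<lambda>n. (if s \<in> Gs then lf m (sg k n s) else 0)) \<longlonglongrightarrow> a s m k" if "s \<in> space M" for s
    proof (cases "s \<in> Gs")
      case True
      have "(\<lambda>n. lf m (sg k n s)) \<longlonglongrightarrow> lf m (g k s)"
        by (intro bounded_linear.tendsto[OF lfbl] Gc1[OF True])
      then show ?thesis using True by (simp add: a_def)
    next
      case False then show ?thesis by (simp add: a_def)
    qed
    show "(\<lambda>s. if s \<in> Gs then lf m (sg k n s) else 0) \<in> borel_measurable M" for n
    proof -
      have [measurable]: "(\<lambda>s. lf m (sg k n s)) \<in> borel_measurable M"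
        using simple_function_compose[OF sg(1)[of k n], of "lf m"] by (intro borel_measurable_simple_function) (simp add: comp_def)
      show ?thesis by measurable
    qed
  qed
  define i0 where "i0 = (undefined :: 'n)"
  have abnd: "\<exists>B. \<forall>k. \<bar>a s m k\<bar> \<le> B" for s m
  proof (cases "s \<in> Gs")
    case True
    have "\<bar>a s m k\<bar> \<le> Bf i0 + C" for k
    proof -
      have "\<bar>a s m k\<bar> \<le> norm (g k s)" using True lfb by (simp add: a_def)
      also have "\<dots> \<le> norm (f i0 s) + norm (f i0 s - g k s)" using norm_triangle_ineq4[of "f i0 s" "f i0 s - g k s"] by simp
      also have "norm (f i0 s) \<le> Bf i0" by (rule Gc4[OF True])
      also have "norm (f i0 s - g k s) \<le> rk k $ i0" by (rule Gc3[OF True])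
      also have "rk k $ i0 \<le> C" using component_le_norm_cart[of "rk k" i0] rvb[of "\<phi> k"] unfolding rk_def by linarith
      finally show ?thesis by simp
    qed
    then show ?thesis by blast
  next
    case False then show ?thesis by (intro exI[of _ 0]) (simp add: a_def)
  qed
  have ttm[measurable]: "(\<lambda>s. tt (a s) J) \<in> borel_measurable M" for J
    by (rule tt_measurable[OF am abnd])
  define Q where "Q s z \<longleftrightarrow> z \<in> W \<and> (\<forall>m. lf m z = tt (a s) m) \<and> (\<forall>K. z \<in> weak_topology closure_of ((\<lambda>k. g k s) ` {K..}))" for s z
  have Qex: "\<exists>z. Q s z" if "s \<in> Gs" for s
  proof -
    have as: "a s = (\<lambda>m k. lf m (g k s))" using that by (simp add: a_def fun_eq_iff)
    have "\<exists>z\<in>W. (\<forall>m. lf m z = tt (\<lambda>m k. lf m (g k s)) m) \<and> (\<forall>K. z \<in> weak_topology closure_of ((\<lambda>k. g k s) ` {K..}))"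
    proof (rule cluster_exists[OF Wc])
      show "g k s \<in> W" for k by (rule Gc2[OF that])
      show "bounded_linear (lf m)" for m by (rule lfbl)
      show "\<exists>B. \<forall>k. \<bar>lf m (g k s)\<bar> \<le> B" for m using abnd[of s m] unfolding as by simp
    qed
    then obtain z where z: "z \<in> W" "\<forall>m. lf m z = tt (\<lambda>m k. lf m (g k s)) m"
        "\<forall>K. z \<in> weak_topology closure_of ((\<lambda>k. g k s) ` {K..})" by blast
    then have "Q s z" unfolding Q_def as by simp
    then show ?thesis by (rule exI)
  qed
  define g0 where "g0 s = (if s \<in> Gs then (SOME z. Q s z) else 0)" for s
  have g0Q: "Q s (g0 s)" if "s \<in> Gs" for s
  proof -
    have "g0 s = (SOME z. Q s z)" using that by (simp add: g0_def)
    then show ?thesis using someI_ex[OF Qex[OF that]] by simp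
  qed
  have g0QW: "g0 s \<in> W" if "s \<in> Gs" for s using g0Q[OF that] unfolding Q_def by simp
  have g0Qt: "lf m (g0 s) = tt (a s) m" if "s \<in> Gs" for s m using g0Q[OF that] unfolding Q_def by simp
  have g0Qc: "g0 s \<in> weak_topology closure_of ((\<lambda>k. g k s) ` {K..})" if "s \<in> Gs" for s K
    using g0Q[OF that] unfolding Q_def by simp
  have g0Y: "g0 s \<in> Y" if "s \<in> space M" for s
  proof (cases "s \<in> Gs")
    case True
    have "(\<lambda>k. g k s) ` {0..} \<subseteq> Y" by (rule image_subsetI) (rule gY[OF True])
    then have "weak_topology closure_of ((\<lambda>k. g k s) ` {0..}) \<subseteq> Y" using Ywc by (rule closure_of_minimal)
    moreover have "g0 s \<in> weak_topology closure_of ((\<lambda>k. g k s) ` {0..})" by (rule g0Qc[OF True])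
    ultimately show ?thesis by (rule subsetD)
  next
    case False then show ?thesis using YP(2) by (simp add: g0_def)
  qed
  have g0ball: "norm (f i s - g0 s) \<le> r $ i" if "s \<in> Gs" for i s
  proof (rule field_le_epsilon)
    fix e :: real assume e: "e > 0"
    have "(\<lambda>k. rk k $ i) \<longlonglongrightarrow> r $ i" using rkconv by (rule tendsto_vec_nth)
    then have "eventually (\<lambda>k. rk k $ i < r $ i + e) sequentially" using order_tendstoD(2)[of _ "r $ i" sequentially "r $ i + e"] e by simp
    then obtain K where K: "\<And>k. k \<ge> K \<Longrightarrow> rk k $ i < r $ i + e" unfolding eventually_sequentially by blast
    let ?B = "{x. norm (x - f i s) \<le> r $ i + e}"
    have "(\<lambda>k. g k s) ` {K..} \<subseteq> ?B"
    proof
      fix y assume "y \<in> (\<lambda>k. g k s) ` {K..}"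
      then obtain k where k: "k \<ge> K" "y = g k s" by auto
      have "norm (f i s - g k s) \<le> rk k $ i" by (rule Gc3[OF that])
      then show "y \<in> ?B" using K[OF k(1)] k(2) by (simp add: norm_minus_commute)
    qed
    then have "weak_topology closure_of ((\<lambda>k. g k s) ` {K..}) \<subseteq> ?B" using weak_closed_ball by (rule closure_of_minimal)
    moreover have "g0 s \<in> weak_topology closure_of ((\<lambda>k. g k s) ` {K..})" by (rule g0Qc[OF that])
    ultimately have "g0 s \<in> ?B" by (rule subsetD)
    then show "norm (f i s - g0 s) \<le> r $ i + e" by (simp add: norm_minus_commute)
  qed
  have dm: "(\<lambda>s. norm (g0 s - d j)) \<in> borel_measurable M" for j
  proof (rule borel_measurableI_greater)
    fix c :: real
    have "{s \<in> space M. c < norm (g0 s - d j)} =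
      {s \<in> space M. (s \<in> Gs \<and> (\<exists>i. c < \<bar>tt (a s) i - lf i (d j)\<bar>)) \<or> (s \<notin> Gs \<and> c < norm (d j))}"
    proof (intro Collect_cong conj_cong refl)
      fix s assume s: "s \<in> space M"
      show "c < norm (g0 s - d j) \<longleftrightarrow> (s \<in> Gs \<and> (\<exists>i. c < \<bar>tt (a s) i - lf i (d j)\<bar>)) \<or> (s \<notin> Gs \<and> c < norm (d j))"
      proof (cases "s \<in> Gs")
        case True
        have "d j \<in> closure (range d)" by (rule closure_subset[THEN subsetD]) simp
        then have "d j \<in> Y" using Yd by simp
        then have z: "g0 s - d j \<in> closure (range d)" using Ydiff g0Y[OF s] Yd by simp
        have "lf i (g0 s - d j) = tt (a s) i - lf i (d j)" for i
          using g0Qt[OF True] by (simp add: linear_diff[OF bounded_linear.linear[OF lfbl]])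
        then show ?thesis using norming_seq[OF lfb lfd lfbl z, of c] True by simp
      next
        case False then show ?thesis by (simp add: g0_def)
      qed
    qed
    also have "\<dots> \<in> sets M" by measurable
    finally show "{s \<in> space M. c < norm (g0 s - d j)} \<in> sets M" .
  qed
  have g0sm: "strongly_measurable M g0"
  proof (rule strongly_measurable_from_dist[OF dm])
    fix s assume "s \<in> space M"
    then show "g0 s \<in> closure (range d)" using g0Y Yd by simp
  qed
  have g0LW: "g0 \<in> LW"
  proof -
    have "AE s in M. norm (g0 s) \<le> Bf i0 + r $ i0" using AEGs
    proof (rule eventually_mono)
      fix s assume s: "s \<in> Gs"
      have "norm (g0 s) \<le> norm (f i0 s) + norm (f i0 s - g0 s)" using norm_triangle_ineq4[of "f i0 s" "f i0 s - g0 s"] by simp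
      also have "norm (f i0 s) \<le> Bf i0" by (rule Gc4[OF s])
      also have "norm (f i0 s - g0 s) \<le> r $ i0" by (rule g0ball[OF s])
      finally show "norm (g0 s) \<le> Bf i0 + r $ i0" by simp
    qed
    moreover have "AE s in M. g0 s \<in> W" using AEGs by (rule eventually_mono) (rule g0QW)
    ultimately have "\<exists>B. AE s in M. norm (g0 s) \<le> B" "AE s in M. g0 s \<in> W" by blast+
    with g0sm show ?thesis unfolding LW_def Linf_on_def Linf_def by simp
  qed
  have \<Phi>g0: "\<Phi> g0 \<le> N r"
  proof -
    have "\<bar>Linf_norm M (\<lambda>s. f i s - g0 s)\<bar> \<le> \<bar>r $ i\<bar>" for i
    proof -
      have ae: "AE s in M. norm (f i s - g0 s) \<le> r $ i" using AEGs by (rule eventually_mono) (rule g0ball)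
      note LP = Linf_norm_props[OF PS ae]
      show ?thesis using LP(2) LP(3)[OF ae] by simp
    qed
    moreover have "N t \<le> N s" if "\<And>i. \<bar>t $ i\<bar> \<le> \<bar>s $ i\<bar>" for t s using assms(4) that unfolding monotonous_def by blast
    ultimately show ?thesis unfolding \<Phi>_def by simp
  qed
  show ?thesis
  proof (rule bexI[of _ g0])
    show "g0 \<in> Linf_on M W" using g0LW unfolding LW_def .
    show "\<forall>g\<in>Linf_on M W. N (\<chi> i. Linf_norm M (\<lambda>s. f i s - g0 s)) \<le> N (\<chi> i. Linf_norm M (\<lambda>s. f i s - g s))"
    proof
      fix g assume "g \<in> Linf_on M W"
      then have "m0 \<le> \<Phi> g" using m0le unfolding LW_def by simp
      then show "N (\<chi> i. Linf_norm M (\<lambda>s. f i s - g0 s)) \<le> N (\<chi> i. Linf_norm M (\<lambda>s. f i s - g s))"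
        using \<Phi>g0 Nr unfolding \<Phi>_def by linarith
    qed
  qed
qed

end
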